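(* Let $\beta=(\beta_n)_{n\ge0}$ be a bounded sequence of positive numbers with a polynomial minoration. Assume that for every $\delta>0$ there exists $C=C(\delta)>0$ such that $\beta_m\le C\beta_n$ whenever $m>(1+\delta)n$. Then for every symbol $\phi$ with $\phi(0)=0$, the composition operator $C_\phi$ is bounded on $H^2(\beta)$.
   Context: $H^2(\beta)$ is the Hilbert space of analytic functions $f(z)=\sum_{n\ge0}a_nz^n$ on the unit disk $\mathbb D$ with $\|f\|^2=\sum_{n\ge0}|a_n|^2\beta_n<\infty$. A symbol is a non-constant analytic map $\phi:\mathbb D\to\mathbb D$ and $C_\phi f=f\circ\phi$. $\beta$ has a polynomial minoration if there are constants $\delta,\alpha>0$ with $\beta_n\ge\delta n^{-\alpha}$ for all $n\ge1$. *)

theory Defs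
  imports "HOL-Analysis.Analysis"
begin

definition taylor_coeff :: "(complex \<Rightarrow> complex) \<Rightarrow> nat \<Rightarrow> complex" where
  "taylor_coeff f n = (deriv ^^ n) f 0 / of_nat (fact n)"

definition H2 :: "(nat \<Rightarrow> real) \<Rightarrow> (complex \<Rightarrow> complex) set" where
  "H2 \<beta> = {f. f holomorphic_on ball 0 1 \<and>
               summable (\<lambda>n. (cmod (taylor_coeff f n))\<^sup>2 * \<beta> n)}"

definition H2_norm :: "(nat \<Rightarrow> real) \<Rightarrow> (complex \<Rightarrow> complex) \<Rightarrow> real" where
  "H2_norm \<beta> f = sqrt (\<Sum>n. (cmod (taylor_coeff f n))\<^sup>2 * \<beta> n)"

definition symbol :: "(complex \<Rightarrow> complex) \<Rightarrow> bool" where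
  "symbol \<phi> \<longleftrightarrow> \<phi> holomorphic_on ball 0 1 \<and> \<phi> ` ball 0 1 \<subseteq> ball 0 1 \<and>
     \<not> (\<exists>c. \<forall>z\<in>ball 0 1. \<phi> z = c)"

definition comp_op_bounded :: "(nat \<Rightarrow> real) \<Rightarrow> (complex \<Rightarrow> complex) \<Rightarrow> bool" where
  "comp_op_bounded \<beta> \<phi> \<longleftrightarrow>
     (\<forall>f\<in>H2 \<beta>. f \<circ> \<phi> \<in> H2 \<beta>) \<and>
     (\<exists>C. \<forall>f\<in>H2 \<beta>. H2_norm \<beta> (f \<circ> \<phi>) \<le> C * H2_norm \<beta> f)"

definition polynomial_minoration :: "(nat \<Rightarrow> real) \<Rightarrow> bool" where
  "polynomial_minoration \<beta> \<longleftrightarrow>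
     (\<exists>\<delta>>0. \<exists>\<alpha>>0. \<forall>n\<ge>1. \<beta> n \<ge> \<delta> * real n powr (-\<alpha>))"

end

theory Submission
  imports Defs "HOL-Complex_Analysis.Complex_Analysis" "HOL-Real_Asymp.Real_Asymp"
begin

definition E :: "real \<Rightarrow> complex" where "E x = exp(2 * of_real pi * \<i> * of_real x)"

lemma norm_E [simp]: "norm (E x) = 1"
  unfolding E_def by (simp add: norm_exp_eq_Re)

lemma E_nonzero [simp]: "E x \<noteq> 0" unfolding E_def by simp

lemma cnj_E: "cnj (E x) = inverse (E x)"
  unfolding E_def by (simp add: exp_cnj flip: exp_minus)

lemma aux1: "(w::complex) \<noteq> 0 \<Longrightarrow> (c::complex) \<noteq> 0 \<Longrightarrow>
   G/((c*w)^k*(c*w)) * (C*c*w) = (C/c^k)*(G*inverse w^k)"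
  by (simp add: power_mult_distrib power_inverse divide_simps)

lemma aux2: "(a::complex) \<noteq> 0 \<Longrightarrow> c/a*(a/b*D) = D/b*c"
  by (simp add: divide_simps)
lemma aux3: "(a::complex) \<noteq> 0 \<Longrightarrow> c \<noteq> 0 \<Longrightarrow> c/a*(a/c*X) = X"
  by (simp add: divide_simps)

lemma coeff_integral:
  fixes r :: real
  assumes holg: "g holomorphic_on ball 0 1" and r: "0 < r" "r < 1"
  shows "((\<lambda>x. g (of_real r * E x) * cnj (E x) ^ k) has_integral (taylor_coeff g k * r ^ k)) {0..1}"
proof -
  have contg: "continuous_on (cball 0 r) g"
    using holg r by (intro holomorphic_on_imp_continuous_on holomorphic_on_subset[OF holg]) auto
  have holg': "g holomorphic_on ball 0 r"
    using holg r by (intro holomorphic_on_subset[OF holg]) auto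
  have "((\<lambda>u. g u / (u-0) ^ (Suc k)) has_contour_integral ((2 * pi * \<i>) / (fact k) * (deriv ^^ k) g 0))
           (circlepath 0 r)"
    by (rule Cauchy_has_contour_integral_higher_derivative_circlepath[OF contg holg']) (use r in simp)
  then have I: "((\<lambda>x. g (circlepath 0 r x) / (circlepath 0 r x) ^ Suc k *
          vector_derivative (circlepath 0 r) (at x within {0..1})) has_integral
          ((2 * pi * \<i>) / (fact k) * (deriv ^^ k) g 0)) {0..1}"
    unfolding has_contour_integral_def by simp
  have eq: "g (circlepath 0 r x) / (circlepath 0 r x) ^ Suc k *
          vector_derivative (circlepath 0 r) (at x within {0..1})
        = (2 * pi * \<i> / r ^ k) * (g (of_real r * E x) * cnj (E x) ^ k)" if "x \<in> {0..1}" for x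
  proof -
    have vd: "vector_derivative (circlepath 0 r) (at x within {0..1}) = 2*pi*\<i>*r*E x"
      using vector_derivative_circlepath01[of x 0 r] that by (simp add: E_def)
    have cp: "circlepath 0 r x = r * E x" by (simp add: circlepath E_def)
    have "g (circlepath 0 r x) / (circlepath 0 r x) ^ Suc k *
          vector_derivative (circlepath 0 r) (at x within {0..1}) =
          g (r * E x) / ((r * E x) ^ k * (r * E x)) * (2*pi*\<i>*r*E x)"
      by (simp only: vd cp power_Suc2)
    also have "\<dots> = (2 * pi * \<i> / r ^ k) * (g (r * E x) * inverse (E x) ^ k)"
      using r aux1[of "E x" "complex_of_real r" "g (r * E x)" k "complex_of_real (2*pi) * \<i>"] by simp
    finally show ?thesis by (simp add: cnj_E)
  qed
  have I2: "((\<lambda>x. (2 * pi * \<i> / r ^ k) * (g (of_real r * E x) * cnj (E x) ^ k)) has_integral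
          ((2 * pi * \<i>) / (fact k) * (deriv ^^ k) g 0)) {0..1}"
    using I eq by (subst has_integral_cong[symmetric]) auto
  have "((\<lambda>x. (r ^ k / (2 * pi * \<i>)) * ((2 * pi * \<i> / r ^ k) * (g (of_real r * E x) * cnj (E x) ^ k))) has_integral
          (r ^ k / (2 * pi * \<i>)) * ((2 * pi * \<i>) / (fact k) * (deriv ^^ k) g 0)) {0..1}"
    by (rule has_integral_mult_right[OF I2])
  moreover have "(r ^ k / (2 * pi * \<i>)) * ((2 * pi * \<i>) / (fact k) * (deriv ^^ k) g 0) = taylor_coeff g k * r ^ k"
    unfolding taylor_coeff_def of_nat_fact by (rule aux2) simp
  moreover have "\<And>x. (r ^ k / (2 * pi * \<i>)) * ((2 * pi * \<i> / r ^ k) * (g (of_real r * E x) * cnj (E x) ^ k)) = g (of_real r * E x) * cnj (E x) ^ k"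
    using r by (intro aux3) auto
  ultimately show ?thesis by simp
qed

lemma taylor_coeff_cong:
  assumes "f holomorphic_on ball 0 1" "g holomorphic_on ball 0 1" "\<And>z. z \<in> ball 0 1 \<Longrightarrow> f z = g z"
  shows "taylor_coeff f n = taylor_coeff g n"
  unfolding taylor_coeff_def
  using higher_deriv_transform_within_open[OF assms(1,2) open_ball _ assms(3), of 0 n] by simp

lemma higher_deriv_zero_fun: "(deriv ^^ n) (\<lambda>z::complex. 0::complex) = (\<lambda>z. 0)"
  by (induction n) auto

lemma taylor_coeff_add:
  assumes "f holomorphic_on ball 0 1" "g holomorphic_on ball 0 1"
  shows "taylor_coeff (\<lambda>z. f z + g z) n = taylor_coeff f n + taylor_coeff g n"
  unfolding taylor_coeff_def
  using higher_deriv_add[OF assms open_ball, of 0 n] by (simp add: add_divide_distrib)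

lemma taylor_coeff_cmult:
  assumes "f holomorphic_on ball 0 1"
  shows "taylor_coeff (\<lambda>z. c * f z) n = c * taylor_coeff f n"
  unfolding taylor_coeff_def
  using higher_deriv_cmult[OF assms _ open_ball, of 0 n c] by simp

lemma taylor_coeff_sum:
  assumes "finite K" "\<And>k. k \<in> K \<Longrightarrow> F k holomorphic_on ball 0 1"
  shows "taylor_coeff (\<lambda>z. \<Sum>k\<in>K. F k z) n = (\<Sum>k\<in>K. taylor_coeff (F k) n)"
  using assms
proof (induction K rule: finite_induct)
  case empty
  then show ?case by (simp add: taylor_coeff_def higher_deriv_zero_fun)
next
  case (insert k K)
  have h1: "F k holomorphic_on ball 0 1" using insert by auto
  have h2: "(\<lambda>z. \<Sum>k\<in>K. F k z) holomorphic_on ball 0 1"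
    using insert by (intro holomorphic_on_sum) auto
  have "taylor_coeff (\<lambda>z. \<Sum>k\<in>insert k K. F k z) n = taylor_coeff (\<lambda>z. F k z + (\<Sum>k\<in>K. F k z)) n"
    using insert by simp
  also have "\<dots> = taylor_coeff (F k) n + taylor_coeff (\<lambda>z. \<Sum>k\<in>K. F k z) n"
    using taylor_coeff_add[OF h1 h2] by simp
  finally show ?case using insert by simp
qed

lemma taylor_coeff_power: "taylor_coeff (\<lambda>z. z ^ m) n = (if n = m then 1 else 0)"
proof -
  have "(deriv ^^ n) (\<lambda>w. (w-0) ^ m) 0 = pochhammer (of_nat (Suc m - n)) n * (0-0::complex) ^ (m - n)"
    by (rule higher_deriv_power)
  then have e: "(deriv ^^ n) (\<lambda>w. w ^ m) 0 = pochhammer (of_nat (Suc m - n)) n * (0::complex) ^ (m - n)"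
    by simp
  show ?thesis
  proof (cases "n = m")
    case True
    then show ?thesis using e by (simp add: taylor_coeff_def pochhammer_fact[symmetric])
  next
    case False
    show ?thesis
    proof (cases "n < m")
      case True then show ?thesis using e False by (simp add: taylor_coeff_def)
    next
      case False2: False
      then have "Suc m - n = 0" using False by simp
      then show ?thesis using e False False2 by (simp add: taylor_coeff_def pochhammer_0_left)
    qed
  qed
qed

lemma higher_deriv_power_mult_zero:
  assumes holp: "\<phi> holomorphic_on ball 0 1" and p0: "\<phi> 0 = 0"
    and "H holomorphic_on ball 0 1" "n < m"
  shows "(deriv ^^ n) (\<lambda>z. \<phi> z ^ m * H z) 0 = 0"
  using assms(3,4)
proof (induction m arbitrary: H n)
  case 0
  then show ?case by simp
next
  case (Suc m H n)
  have eq: "(\<lambda>z. \<phi> z ^ Suc m * H z) = (\<lambda>z. \<phi> z * (\<phi> z ^ m * H z))"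
    by (simp add: algebra_simps)
  have hol: "(\<lambda>z. \<phi> z ^ m * H z) holomorphic_on ball 0 1"
    by (intro holomorphic_intros holp Suc.prems)
  have "(deriv ^^ n) (\<lambda>z. \<phi> z * (\<phi> z ^ m * H z)) 0 =
      (\<Sum>i = 0..n. of_nat (n choose i) * (deriv ^^ i) \<phi> 0 * (deriv ^^ (n-i)) (\<lambda>z. \<phi> z ^ m * H z) 0)"
    by (rule higher_deriv_mult[OF holp hol]) auto
  also have "\<dots> = 0"
  proof (rule sum.neutral, rule ballI)
    fix i assume i: "i \<in> {0..n}"
    show "of_nat (n choose i) * (deriv ^^ i) \<phi> 0 * (deriv ^^ (n-i)) (\<lambda>z. \<phi> z ^ m * H z) 0 = 0"
    proof (cases "i = 0")
      case True then show ?thesis by (simp add: p0)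
    next
      case False
      then have "n - i < m" using Suc.prems i by auto
      then show ?thesis using Suc.IH[OF Suc.prems(1)] by simp
    qed
  qed
  finally show ?case by (simp only: eq)
qed

lemma taylor_coeff_power_mult_zero:
  assumes "\<phi> holomorphic_on ball 0 1" "\<phi> 0 = 0" "H holomorphic_on ball 0 1" "n < m"
  shows "taylor_coeff (\<lambda>z. \<phi> z ^ m * H z) n = 0"
  unfolding taylor_coeff_def using higher_deriv_power_mult_zero[OF assms] by simp

lemma taylor_series:
  assumes "f holomorphic_on ball 0 1" "w \<in> ball 0 1"
  shows "(\<lambda>k. taylor_coeff f k * w ^ k) sums f w"
  using holomorphic_power_series[OF assms] by (simp add: taylor_coeff_def)

lemma taylor_coeff_comp_trunc:
  fixes f \<phi> :: "complex \<Rightarrow> complex"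
  assumes holf: "f holomorphic_on ball 0 1" and holp: "\<phi> holomorphic_on ball 0 1"
    and pball: "\<phi> ` ball 0 1 \<subseteq> ball 0 1" and p0: "\<phi> 0 = 0" and nj: "n \<le> j"
  shows "taylor_coeff (f \<circ> \<phi>) n = (\<Sum>k\<le>j. taylor_coeff f k * taylor_coeff (\<lambda>z. \<phi> z ^ k) n)"
proof -
  define a where "a k = taylor_coeff f k" for k
  define h where "h w = (if w = 0 then a (Suc j) else (f w - (\<Sum>k\<le>j. a k * w ^ k)) / w ^ Suc j)" for w
  have hsum: "(\<lambda>i. a (i + Suc j) * (w - 0) ^ i) sums h w" if w: "w \<in> ball 0 1" for w
  proof (cases "w = 0")
    case True
    then show ?thesis using powser_sums_zero[of "\<lambda>i. a (i + Suc j)"] by (simp add: h_def)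
  next
    case False
    have "(\<lambda>k. a k * w ^ k) sums f w" using taylor_series[OF holf w] by (simp add: a_def)
    then have "(\<lambda>i. a (i + Suc j) * w ^ (i + Suc j)) sums (f w - (\<Sum>i<Suc j. a i * w ^ i))"
      by (subst sums_iff_shift') 
    then have "(\<lambda>i. a (i + Suc j) * w ^ (i + Suc j) / w ^ Suc j) sums ((f w - (\<Sum>i<Suc j. a i * w ^ i)) / w ^ Suc j)"
      by (rule sums_divide)
    moreover have "\<And>i. a (i + Suc j) * w ^ (i + Suc j) / w ^ Suc j = a (i + Suc j) * (w - 0) ^ i"
      using False by (simp add: power_add)
    ultimately show ?thesis using False by (simp add: h_def lessThan_Suc_atMost)
  qed
  have holh: "h holomorphic_on ball 0 1"
    by (rule power_series_holomorphic[OF hsum])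
  have feq: "f w = (\<Sum>k\<le>j. a k * w ^ k) + w ^ Suc j * h w" if w: "w \<in> ball 0 1" for w
  proof (cases "w = 0")
    case True
    have "(\<Sum>k\<le>j. a k * 0 ^ k) = a 0"
      by (subst sum.atMost_shift) simp
    moreover have "a 0 = f 0" by (simp add: a_def taylor_coeff_def)
    ultimately show ?thesis using True by simp
  next
    case False
    then show ?thesis by (simp add: h_def)
  qed
  have holc: "(h \<circ> \<phi>) holomorphic_on ball 0 1"
    using holomorphic_on_compose_gen[OF holp holh pball] .
  have hol1: "(\<lambda>z. \<Sum>k\<le>j. a k * \<phi> z ^ k) holomorphic_on ball 0 1"
    by (intro holomorphic_intros holp)
  have hol2: "(\<lambda>z. \<phi> z ^ Suc j * (h \<circ> \<phi>) z) holomorphic_on ball 0 1"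
    by (intro holomorphic_intros holp holc)
  have holfc: "(f \<circ> \<phi>) holomorphic_on ball 0 1"
    using holomorphic_on_compose_gen[OF holp holf pball] .
  have "taylor_coeff (f \<circ> \<phi>) n =
      taylor_coeff (\<lambda>z. (\<Sum>k\<le>j. a k * \<phi> z ^ k) + \<phi> z ^ Suc j * (h \<circ> \<phi>) z) n"
  proof (rule taylor_coeff_cong[OF holfc])
    show "(\<lambda>z. (\<Sum>k\<le>j. a k * \<phi> z ^ k) + \<phi> z ^ Suc j * (h \<circ> \<phi>) z) holomorphic_on ball 0 1"
      by (intro holomorphic_intros hol1 hol2)
    fix z :: complex assume "z \<in> ball 0 1"
    then have "\<phi> z \<in> ball 0 1" using pball by blast
    then show "(f \<circ> \<phi>) z = (\<Sum>k\<le>j. a k * \<phi> z ^ k) + \<phi> z ^ Suc j * (h \<circ> \<phi>) z"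
      using feq by simp
  qed
  also have "\<dots> = taylor_coeff (\<lambda>z. \<Sum>k\<le>j. a k * \<phi> z ^ k) n + taylor_coeff (\<lambda>z. \<phi> z ^ Suc j * (h \<circ> \<phi>) z) n"
    by (rule taylor_coeff_add[OF hol1 hol2])
  also have "taylor_coeff (\<lambda>z. \<phi> z ^ Suc j * (h \<circ> \<phi>) z) n = 0"
    by (rule taylor_coeff_power_mult_zero[OF holp p0 holc]) (use nj in simp)
  also have "taylor_coeff (\<lambda>z. \<Sum>k\<le>j. a k * \<phi> z ^ k) n = (\<Sum>k\<le>j. taylor_coeff (\<lambda>z. a k * \<phi> z ^ k) n)"
    by (rule taylor_coeff_sum) (auto intro!: holomorphic_intros holp)
  also have "\<dots> = (\<Sum>k\<le>j. a k * taylor_coeff (\<lambda>z. \<phi> z ^ k) n)"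
    by (intro sum.cong refl taylor_coeff_cmult) (auto intro!: holomorphic_intros holp)
  finally show ?thesis by (simp add: a_def o_def)
qed

lemma taylor_coeff_bound:
  fixes \<rho> :: real
  assumes holF: "F holomorphic_on ball 0 1" and r: "0 < \<rho>" "\<rho> < 1"
    and B: "\<And>z. norm z = \<rho> \<Longrightarrow> norm (F z) \<le> B"
  shows "norm (taylor_coeff F n) \<le> B / \<rho> ^ n"
proof -
  have "norm ((deriv ^^ n) F 0) \<le> fact n * B / \<rho> ^ n"
  proof (rule Cauchy_inequality)
    show "F holomorphic_on ball 0 \<rho>" using r by (intro holomorphic_on_subset[OF holF]) auto
    show "continuous_on (cball 0 \<rho>) F" using r
      by (intro holomorphic_on_imp_continuous_on holomorphic_on_subset[OF holF]) auto
    show "\<And>x. norm (0 - x) = \<rho> \<Longrightarrow> norm (F x) \<le> B" using B by simp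
  qed (use r in auto)
  moreover have "norm (taylor_coeff F n) = norm ((deriv ^^ n) F 0) / fact n"
    by (simp add: taylor_coeff_def norm_divide)
  ultimately have "norm (taylor_coeff F n) \<le> (fact n * B / \<rho> ^ n) / fact n"
    by (metis divide_right_mono fact_ge_zero)
  also have "(fact n * B / \<rho> ^ n) / fact n = B / \<rho> ^ n" by simp
  finally show ?thesis .
qed

definition Mr :: "real \<Rightarrow> (complex \<Rightarrow> complex) \<Rightarrow> real" where
  "Mr r g = integral {0..1} (\<lambda>x. (cmod (g (complex_of_real r * E x)))\<^sup>2)"

lemma cont_E: "continuous_on S E"
  unfolding E_def by (intro continuous_intros)

lemma circ_in_ball: "0 \<le> r \<Longrightarrow> r < 1 \<Longrightarrow> complex_of_real r * E x \<in> ball 0 1"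
  by (simp add: norm_mult)

lemma cont_circ:
  assumes "g holomorphic_on ball 0 1" "0 \<le> r" "r < 1"
  shows "continuous_on {0..1} (\<lambda>x. g (complex_of_real r * E x))"
  by (rule continuous_on_compose2[OF holomorphic_on_imp_continuous_on[OF assms(1)]])
     (use assms in \<open>auto intro!: continuous_intros cont_E simp: norm_mult\<close>)

lemma Mr_has_integral:
  assumes "g holomorphic_on ball 0 1" "0 \<le> r" "r < 1"
  shows "((\<lambda>x. (cmod (g (complex_of_real r * E x)))\<^sup>2) has_integral Mr r g) {0..1}"
proof -
  have "continuous_on {0..1} (\<lambda>x. (cmod (g (complex_of_real r * E x)))\<^sup>2)"
    by (intro continuous_intros cont_circ[OF assms])
  then show ?thesis unfolding Mr_def
    by (intro integrable_integral integrable_continuous_interval)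
qed

lemma Mr_has_integral_c:
  assumes "g holomorphic_on ball 0 1" "0 \<le> r" "r < 1"
  shows "((\<lambda>x. g (complex_of_real r * E x) * cnj (g (complex_of_real r * E x))) has_integral
     complex_of_real (Mr r g)) {0..1}"
  using has_integral_of_real[OF Mr_has_integral[OF assms], where 'b=complex]
  by (simp only: complex_norm_square)

lemma sqnorm_integral:
  assumes "((\<lambda>x. h x * cnj (h x)) has_integral complex_of_real v) {0..1}"
  shows "((\<lambda>x. (cmod (h x))\<^sup>2) has_integral v) {0..1}"
  using has_integral_linear[OF assms bounded_linear_Re]
  by (simp add: o_def complex_mult_cnj cmod_power2)

lemma orth: "((\<lambda>x. E x ^ m * cnj (E x) ^ n) has_integral (if n = m then 1 else 0)) {0..1}"
proof -
  have c: "((\<lambda>x. (complex_of_real (1/2) * E x) ^ m * cnj (E x) ^ n) has_integral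
      (taylor_coeff (\<lambda>z. z ^ m) n * complex_of_real (1/2) ^ n)) {0..1}"
  proof -
    have h: "(\<lambda>z::complex. z ^ m) holomorphic_on ball 0 1" by (intro holomorphic_intros)
    show ?thesis using coeff_integral[OF h, of "1/2" n] by simp
  qed
  have "((\<lambda>x. (2::complex) ^ m * ((complex_of_real (1/2) * E x) ^ m * cnj (E x) ^ n)) has_integral
      (2 ^ m * (taylor_coeff (\<lambda>z. z ^ m) n * complex_of_real (1/2) ^ n))) {0..1}"
    by (rule has_integral_mult_right[OF c])
  moreover have "(\<lambda>x. (2::complex) ^ m * ((complex_of_real (1/2) * E x) ^ m * cnj (E x) ^ n)) = (\<lambda>x. E x ^ m * cnj (E x) ^ n)"
    by (rule ext) (simp add: power_mult_distrib field_simps)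
  moreover have "(2::complex) ^ m * (taylor_coeff (\<lambda>z. z ^ m) n * complex_of_real (1/2) ^ n) = (if n = m then 1 else 0)"
    by (simp add: taylor_coeff_power power_mult_distrib field_simps)
  ultimately show ?thesis by (simp only:)
qed

lemma bessel:
  fixes g :: "complex \<Rightarrow> complex" and r :: real
  assumes holg: "g holomorphic_on ball 0 1" and r: "0 < r" "r < 1"
  shows "(\<Sum>n\<le>N. (cmod (taylor_coeff g n))\<^sup>2 * r ^ (2*n)) \<le> Mr r g"
proof -
  define G where "G x = g (complex_of_real r * E x)" for x
  define c where "c n = taylor_coeff g n * complex_of_real r ^ n" for n
  define P where "P x = (\<Sum>n\<le>N. c n * E x ^ n)" for x
  define S where "S = (\<Sum>n\<le>N. (cmod (c n))\<^sup>2)"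
  have sumS: "(\<Sum>n\<le>N. cnj (c n) * c n) = complex_of_real S"
    unfolding S_def of_real_sum
  proof (intro sum.cong refl)
    fix n show "cnj (c n) * c n = complex_of_real ((cmod (c n))\<^sup>2)"
      by (subst complex_norm_square) (rule mult.commute)
  qed
  have I1: "((\<lambda>x. G x * cnj (E x) ^ n) has_integral c n) {0..1}" for n
    using coeff_integral[OF holg r, of n] by (simp add: G_def c_def)
  have I2: "((\<lambda>x. G x * cnj (P x)) has_integral complex_of_real S) {0..1}"
  proof -
    have "((\<lambda>x. \<Sum>n\<le>N. cnj (c n) * (G x * cnj (E x) ^ n)) has_integral (\<Sum>n\<le>N. cnj (c n) * c n)) {0..1}"
      by (intro has_integral_sum has_integral_mult_right I1) auto
    moreover have "G x * cnj (P x) = (\<Sum>n\<le>N. cnj (c n) * (G x * cnj (E x) ^ n))" for x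
      by (simp add: P_def sum_distrib_left mult_ac)
    ultimately show ?thesis by (simp add: sumS)
  qed
  have I3: "((\<lambda>x. P x * cnj (E x) ^ n) has_integral c n) {0..1}" if "n \<le> N" for n
  proof -
    have "((\<lambda>x. \<Sum>m\<le>N. c m * (E x ^ m * cnj (E x) ^ n)) has_integral (\<Sum>m\<le>N. c m * (if n = m then 1 else 0))) {0..1}"
      by (intro has_integral_sum has_integral_mult_right orth) auto
    moreover have "(\<Sum>m\<le>N. c m * (if n = m then 1 else 0)) = c n"
    proof -
      have "(\<Sum>m\<le>N. c m * (if n = m then 1 else 0)) = (\<Sum>m\<le>N. if m = n then c m else 0)"
        by (intro sum.cong) auto
      then show ?thesis using that by (simp add: sum.delta)
    qed
    moreover have "P x * cnj (E x) ^ n = (\<Sum>m\<le>N. c m * (E x ^ m * cnj (E x) ^ n))" for x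
      by (simp add: P_def sum_distrib_left mult_ac)
    ultimately show ?thesis by simp
  qed
  have I4: "((\<lambda>x. P x * cnj (P x)) has_integral complex_of_real S) {0..1}"
  proof -
    have "((\<lambda>x. \<Sum>n\<le>N. cnj (c n) * (P x * cnj (E x) ^ n)) has_integral (\<Sum>n\<le>N. cnj (c n) * c n)) {0..1}"
      by (intro has_integral_sum has_integral_mult_right I3) auto
    moreover have "P x * cnj (P x) = (\<Sum>n\<le>N. cnj (c n) * (P x * cnj (E x) ^ n))" for x
    proof -
      have "cnj (P x) = (\<Sum>n\<le>N. cnj (c n) * cnj (E x) ^ n)" by (simp add: P_def)
      then show ?thesis by (simp add: sum_distrib_left mult_ac)
    qed
    ultimately show ?thesis by (simp add: sumS)
  qed
  have I5: "((\<lambda>x. G x * cnj (G x)) has_integral complex_of_real (Mr r g)) {0..1}"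
    using Mr_has_integral_c[OF holg] r by (simp add: G_def)
  have I6: "((\<lambda>x. cnj (G x * cnj (P x))) has_integral cnj (complex_of_real S)) {0..1}"
    using has_integral_linear[OF I2 bounded_linear_cnj] by (simp add: o_def)
  have I7: "((\<lambda>x. (G x - P x) * cnj (G x - P x)) has_integral complex_of_real (Mr r g - S)) {0..1}"
  proof -
    have "((\<lambda>x. G x * cnj (G x) - G x * cnj (P x) - cnj (G x * cnj (P x)) + P x * cnj (P x)) has_integral
       (complex_of_real (Mr r g) - complex_of_real S - cnj (complex_of_real S) + complex_of_real S)) {0..1}"
      by (intro has_integral_add has_integral_diff I2 I4 I5 I6)
    moreover have "\<And>x. G x * cnj (G x) - G x * cnj (P x) - cnj (G x * cnj (P x)) + P x * cnj (P x)
        = (G x - P x) * cnj (G x - P x)"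
      by (simp add: algebra_simps)
    ultimately show ?thesis by simp
  qed
  have "0 \<le> Mr r g - S"
    by (rule has_integral_nonneg[OF sqnorm_integral[OF I7]]) simp
  moreover have "S = (\<Sum>n\<le>N. (cmod (taylor_coeff g n))\<^sup>2 * r ^ (2*n))"
    unfolding S_def c_def
    by (intro sum.cong refl) (use r in \<open>simp add: norm_mult norm_power power_mult_distrib power_mult[symmetric] mult.commute\<close>)
  ultimately show ?thesis by simp
qed

lemma Mr_add_const:
  assumes holX: "X holomorphic_on ball 0 1" and X0: "X 0 = 0" and r: "0 < r" "r < 1"
  shows "Mr r (\<lambda>z. a + X z) = (cmod a)\<^sup>2 + Mr r X"
proof -
  define G where "G x = X (complex_of_real r * E x)" for x
  have I0: "(G has_integral 0) {0..1}"
    unfolding G_def using coeff_integral[OF holX r, of 0] X0 by (simp add: taylor_coeff_def)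
  have IX: "((\<lambda>x. G x * cnj (G x)) has_integral complex_of_real (Mr r X)) {0..1}"
    using Mr_has_integral_c[OF holX] r by (simp add: G_def)
  have Ic: "((\<lambda>x. cnj (G x)) has_integral 0) {0..1}"
    using has_integral_linear[OF I0 bounded_linear_cnj] by (simp add: o_def)
  have Ia: "((\<lambda>x::real. a * cnj a) has_integral (a * cnj a)) {0..1}"

    using has_integral_const_real[of "a * cnj a" 0 1] by simp
  have "((\<lambda>x. a * cnj a + (a * cnj (G x) + (cnj a * G x + G x * cnj (G x)))) has_integral
      (a * cnj a + (a * 0 + (cnj a * 0 + complex_of_real (Mr r X))))) {0..1}"
    by (intro has_integral_add Ia has_integral_mult_right Ic I0 IX)
  moreover have "(\<lambda>x. a * cnj a + (a * cnj (G x) + (cnj a * G x + G x * cnj (G x)))) = (\<lambda>x. (a + G x) * cnj (a + G x))"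
    by (rule ext) (simp add: algebra_simps)
  moreover have "a * cnj a + (a * 0 + (cnj a * 0 + complex_of_real (Mr r X)))
     = complex_of_real ((cmod a)\<^sup>2 + Mr r X)"
    by (simp add: complex_norm_square[of a, symmetric] del: of_real_power)

  ultimately have "((\<lambda>x. (a + G x) * cnj (a + G x)) has_integral complex_of_real ((cmod a)\<^sup>2 + Mr r X)) {0..1}"
    by (simp only:)

  from sqnorm_integral[OF this] show ?thesis
    unfolding Mr_def G_def by (rule integral_unique)
qed

lemma schwarz_le:
  fixes \<phi> :: "complex \<Rightarrow> complex"
  assumes holp: "\<phi> holomorphic_on ball 0 1" and pball: "\<phi> ` ball 0 1 \<subseteq> ball 0 1" and p0: "\<phi> 0 = 0"
    and w: "norm w < 1"
  shows "norm (\<phi> w) \<le> norm w"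
proof -
  have no: "norm (\<phi> z) < 1" if "norm z < 1" for z
  proof -
    have "z \<in> ball 0 1" using that by simp
    then have "\<phi> z \<in> ball 0 1" using pball by blast
    then show ?thesis by simp
  qed
  show ?thesis by (rule Schwarz_Lemma(1)[OF holp p0 no w])
qed

lemma littlewood_r:
  fixes \<phi> :: "complex \<Rightarrow> complex" and p :: "nat \<Rightarrow> complex" and r :: real
  assumes holp: "\<phi> holomorphic_on ball 0 1" and pball: "\<phi> ` ball 0 1 \<subseteq> ball 0 1" and p0: "\<phi> 0 = 0"
    and r: "0 < r" "r < 1"
  shows "Mr r (\<lambda>z. \<Sum>k\<le>L. p k * \<phi> z ^ k) \<le> (\<Sum>k\<le>L. (cmod (p k))\<^sup>2 * r ^ (2*k))"
proof (induction L arbitrary: p)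
  case 0
  show ?case by (simp add: Mr_def)
next
  case (Suc L p)
  define Q where "Q z = (\<Sum>k\<le>L. p (Suc k) * \<phi> z ^ k)" for z
  have holQ: "Q holomorphic_on ball 0 1" unfolding Q_def by (intro holomorphic_intros holp)
  have holX: "(\<lambda>z. \<phi> z * Q z) holomorphic_on ball 0 1" by (intro holomorphic_intros holp holQ)
  have eq: "(\<lambda>z. \<Sum>k\<le>Suc L. p k * \<phi> z ^ k) = (\<lambda>z. p 0 + \<phi> z * Q z)"
    by (rule ext) (simp add: Q_def sum.atMost_Suc_shift sum_distrib_left mult_ac del: sum.atMost_Suc)
  have "Mr r (\<lambda>z. \<Sum>k\<le>Suc L. p k * \<phi> z ^ k) = (cmod (p 0))\<^sup>2 + Mr r (\<lambda>z. \<phi> z * Q z)"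
    unfolding eq by (rule Mr_add_const[OF holX _ r]) (simp add: p0)
  also have "Mr r (\<lambda>z. \<phi> z * Q z) \<le> r\<^sup>2 * Mr r Q"
  proof -
    have "Mr r (\<lambda>z. \<phi> z * Q z) \<le> integral {0..1} (\<lambda>x. r\<^sup>2 * (cmod (Q (complex_of_real r * E x)))\<^sup>2)"
      unfolding Mr_def
    proof (rule integral_le)
      show "(\<lambda>x. (cmod (\<phi> (complex_of_real r * E x) * Q (complex_of_real r * E x)))\<^sup>2) integrable_on {0..1}"
        using Mr_has_integral[OF holX, of r] r by (auto simp: integrable_on_def)
      show "(\<lambda>x. r\<^sup>2 * (cmod (Q (complex_of_real r * E x)))\<^sup>2) integrable_on {0..1}"
        using has_integral_mult_right[OF Mr_has_integral[OF holQ, of r], of "r\<^sup>2"] r by (auto simp: integrable_on_def)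


      fix x :: real
      have w: "norm (complex_of_real r * E x) < 1" using r by (simp add: norm_mult)
      have "norm (\<phi> (complex_of_real r * E x)) \<le> r"
        using schwarz_le[OF holp pball p0 w] r by (simp add: norm_mult)
      then have "(cmod (\<phi> (complex_of_real r * E x)))\<^sup>2 \<le> r\<^sup>2"
        by (intro power_mono) auto
      then show "(cmod (\<phi> (complex_of_real r * E x) * Q (complex_of_real r * E x)))\<^sup>2
          \<le> r\<^sup>2 * (cmod (Q (complex_of_real r * E x)))\<^sup>2"
        by (simp add: norm_mult power_mult_distrib mult_right_mono)
    qed
    also have "\<dots> = r\<^sup>2 * Mr r Q" by (simp add: Mr_def)
    finally show ?thesis .
  qed
  also have "Mr r Q \<le> (\<Sum>k\<le>L. (cmod (p (Suc k)))\<^sup>2 * r ^ (2*k))"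
    using Suc.IH[of "\<lambda>k. p (Suc k)"] by (simp add: Q_def[abs_def])

  then have "(cmod (p 0))\<^sup>2 + r\<^sup>2 * Mr r Q \<le> (cmod (p 0))\<^sup>2 + r\<^sup>2 * (\<Sum>k\<le>L. (cmod (p (Suc k)))\<^sup>2 * r ^ (2*k))"
    by (simp add: mult_left_mono)
  also have "\<dots> = (\<Sum>k\<le>Suc L. (cmod (p k))\<^sup>2 * r ^ (2*k))"
    by (simp add: sum.atMost_Suc_shift sum_distrib_left power_add mult_ac power2_eq_square del: sum.atMost_Suc)

  finally show ?case by simp
qed

lemma littlewood_coeff:
  fixes \<phi> :: "complex \<Rightarrow> complex" and p :: "nat \<Rightarrow> complex"
  assumes holp: "\<phi> holomorphic_on ball 0 1" and pball: "\<phi> ` ball 0 1 \<subseteq> ball 0 1" and p0: "\<phi> 0 = 0"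
  shows "(\<Sum>n\<le>j. (cmod (taylor_coeff (\<lambda>z. \<Sum>k\<le>L. p k * \<phi> z ^ k) n))\<^sup>2) \<le> (\<Sum>k\<le>L. (cmod (p k))\<^sup>2)"
proof -
  define t where "t n = (cmod (taylor_coeff (\<lambda>z. \<Sum>k\<le>L. p k * \<phi> z ^ k) n))\<^sup>2" for n
  define A where "A = (\<Sum>k\<le>L. (cmod (p k))\<^sup>2)"
  have hol: "(\<lambda>z. \<Sum>k\<le>L. p k * \<phi> z ^ k) holomorphic_on ball 0 1" by (intro holomorphic_intros holp)
  have le: "(\<Sum>n\<le>j. t n * r ^ (2*n)) \<le> A" if r: "0 < r" "r < 1" for r :: real
  proof -
    have "(\<Sum>n\<le>j. t n * r ^ (2*n)) \<le> Mr r (\<lambda>z. \<Sum>k\<le>L. p k * \<phi> z ^ k)"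
      unfolding t_def by (rule bessel[OF hol r])
    also have "\<dots> \<le> (\<Sum>k\<le>L. (cmod (p k))\<^sup>2 * r ^ (2*k))"
      by (rule littlewood_r[OF holp pball p0 r])
    also have "\<dots> \<le> A" unfolding A_def
      by (intro sum_mono mult_left_le power_le_one) (use r in auto)
    finally show ?thesis .
  qed
  have lim: "((\<lambda>r. \<Sum>n\<le>j. t n * r ^ (2*n)) \<longlongrightarrow> (\<Sum>n\<le>j. t n * 1 ^ (2*n))) (at_left (1::real))"
    by (intro tendsto_intros)
  have ev: "eventually (\<lambda>r. (\<Sum>n\<le>j. t n * r ^ (2*n)) \<le> A) (at_left (1::real))"
    using eventually_at_left_real[of 0 "1::real"] by (rule eventually_mono) (auto intro: le)
  have "(\<Sum>n\<le>j. t n * 1 ^ (2*n)) \<le> A"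
    by (rule tendsto_upperbound[OF lim ev]) simp
  then show ?thesis by (simp add: t_def A_def)
qed

lemma abel_sum:
  fixes b x :: "nat \<Rightarrow> real"
  shows "(\<Sum>n\<le>N. b n * x n) = b (Suc N) * (\<Sum>n\<le>N. x n) + (\<Sum>j\<le>N. (b j - b (Suc j)) * (\<Sum>n\<le>j. x n))"
  by (induction N) (simp_all add: algebra_simps)

lemma tri_swap:
  fixes F :: "nat \<Rightarrow> nat \<Rightarrow> real"
  shows "(\<Sum>j\<le>N. \<Sum>k\<le>j. F j k) = (\<Sum>k\<le>N. \<Sum>j\<in>{k..N}. F j k)"
proof -
  have "(\<Sum>j\<le>N. \<Sum>k\<le>j. F j k) = (\<Sum>j\<le>N. \<Sum>k\<le>N. if k \<le> j then F j k else 0)"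
  proof (rule sum.cong[OF refl])
    fix j assume "j \<in> {..N}"
    then have "{..j} \<subseteq> {..N}" by auto
    then show "(\<Sum>k\<le>j. F j k) = (\<Sum>k\<le>N. if k \<le> j then F j k else 0)"
      by (simp add: sum.If_cases Int_absorb1 Collect_conv_if atMost_def[symmetric])
  qed
  also have "\<dots> = (\<Sum>k\<le>N. \<Sum>j\<le>N. if k \<le> j then F j k else 0)"
    by (rule sum.swap)
  also have "\<dots> = (\<Sum>k\<le>N. \<Sum>j\<in>{k..N}. F j k)"
  proof (rule sum.cong[OF refl])
    fix k assume "k \<in> {..N}"
    have "{..N} \<inter> {j. k \<le> j} = {k..N}" by auto
    then show "(\<Sum>j\<le>N. if k \<le> j then F j k else 0) = (\<Sum>j\<in>{k..N}. F j k)"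
      by (simp add: sum.If_cases)
  qed
  finally show ?thesis .
qed

lemma abstract_bound:
  fixes \<beta> A x e :: "nat \<Rightarrow> real" and \<delta> C M D :: real
  assumes pos: "\<And>n. \<beta> n > 0" and bdd: "\<And>n. \<beta> n \<le> M"
    and A: "\<And>k. A k \<ge> 0" and x: "\<And>n. x n \<ge> 0" and e: "\<And>k. e k \<ge> 0"
    and \<delta>: "\<delta> > 0"
    and C: "\<And>m k. real m > (1 + \<delta>) * real k \<Longrightarrow> \<beta> m \<le> C * \<beta> k"
    and D: "\<And>k. e k \<le> D * \<beta> k"
    and blk: "\<And>j. (\<Sum>n\<le>j. x n) \<le> (\<Sum>k\<le>j. A k * (if (1 + \<delta>) * real k < real j then 2 else 2 * e k))"
  shows "(\<Sum>n\<le>N. \<beta> n * x n) \<le> (2 * C + 2 * M * D) * (\<Sum>k\<le>N. \<beta> k * A k)"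
proof -
  define b where "b n = (if n \<le> N then Max (\<beta> ` {n..N}) else 0)" for n
  have b_ge: "\<beta> n \<le> b n" if "n \<le> N" for n
    using that by (auto simp: b_def intro!: Max_ge)
  have b_in: "\<exists>m\<in>{n..N}. b n = \<beta> m" if "n \<le> N" for n
  proof -
    have "Max (\<beta> ` {n..N}) \<in> \<beta> ` {n..N}" using that by (intro Max_in) auto
    then obtain m where "m \<in> {n..N}" "Max (\<beta> ` {n..N}) = \<beta> m" by blast
    then show ?thesis using that by (auto simp: b_def)

  qed
  have b_nonneg: "0 \<le> b n" for n
  proof (cases "n \<le> N")
    case True then show ?thesis using b_ge[OF True] pos[of n] by linarith
  next
    case False then show ?thesis by (simp add: b_def)
  qed

  have b_le_M: "b n \<le> M" for n
  proof (cases "n \<le> N")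
    case True then show ?thesis using b_in[OF True] bdd by auto
  next
    case False then show ?thesis using bdd[of 0] pos[of 0] by (simp add: b_def)
  qed
  have b_mono: "b (Suc n) \<le> b n" for n
  proof (cases "Suc n \<le> N")
    case True
    then have "\<beta> ` {Suc n..N} \<subseteq> \<beta> ` {n..N}" by auto
    then show ?thesis using True by (auto simp: b_def intro!: Max_mono)
  next
    case False then show ?thesis using b_nonneg[of n] by (simp add: b_def)
  qed
  have bN: "b (Suc N) = 0" by (simp add: b_def)
  define w where "w j = b j - b (Suc j)" for j
  have w: "w j \<ge> 0" for j using b_mono[of j] by (simp add: w_def)
  have telesc: "(\<Sum>j\<in>{a..N}. w j) = b a" if "a \<le> Suc N" for a
  proof -
    have "(\<Sum>j\<in>{a..N}. w j) = - (\<Sum>j = a..N. b (Suc j) - b j)"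
      by (simp add: w_def sum_negf[symmetric])
    also have "\<dots> = b a" using sum_Suc_diff[OF that, of b] bN by simp
    finally show ?thesis .
  qed
  define g where "g j k = (if (1 + \<delta>) * real k < real j then 2 else 2 * e k)" for j k
  have "(\<Sum>n\<le>N. \<beta> n * x n) \<le> (\<Sum>n\<le>N. b n * x n)"
    by (intro sum_mono mult_right_mono b_ge x) auto
  also have "\<dots> = (\<Sum>j\<le>N. w j * (\<Sum>n\<le>j. x n))"
    using abel_sum[of b x N] bN by (simp add: w_def)
  also have "\<dots> \<le> (\<Sum>j\<le>N. w j * (\<Sum>k\<le>j. A k * g j k))"
  proof (rule sum_mono)
    fix j show "w j * (\<Sum>n\<le>j. x n) \<le> w j * (\<Sum>k\<le>j. A k * g j k)"
      by (rule mult_left_mono) (use blk[of j] w[of j] in \<open>auto simp: g_def\<close>)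
  qed

  also have "\<dots> = (\<Sum>j\<le>N. \<Sum>k\<le>j. A k * (w j * g j k))"
    by (simp add: sum_distrib_left mult_ac)
  also have "\<dots> = (\<Sum>k\<le>N. \<Sum>j\<in>{k..N}. A k * (w j * g j k))"
    by (rule tri_swap)
  also have "\<dots> = (\<Sum>k\<le>N. A k * (\<Sum>j\<in>{k..N}. w j * g j k))"
    by (simp add: sum_distrib_left)
  also have "\<dots> \<le> (\<Sum>k\<le>N. A k * ((2 * C + 2 * M * D) * \<beta> k))"
  proof (intro sum_mono mult_left_mono A)
    fix k assume k: "k \<in> {..N}"
    define j0 where "j0 = nat \<lfloor>(1 + \<delta>) * real k\<rfloor> + 1"
    have fl0: "0 \<le> \<lfloor>(1 + \<delta>) * real k\<rfloor>" using \<delta> by simp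
    have low_iff: "(1 + \<delta>) * real k < real j \<longleftrightarrow> j0 \<le> j" for j
    proof -
      have "(1 + \<delta>) * real k < real j \<longleftrightarrow> \<lfloor>(1 + \<delta>) * real k\<rfloor> < int j"
        by (simp add: floor_less_iff)
      also have "\<dots> \<longleftrightarrow> j0 \<le> j" using fl0 unfolding j0_def
        by (simp only: Suc_eq_plus1[symmetric] Suc_le_eq nat_less_iff)

      finally show ?thesis .
    qed
    have kj0: "k < j0"
    proof -
      have "(1 + \<delta>) * real k < real (Suc k + 0) \<or> True" by simp
      have "real k \<le> (1 + \<delta>) * real k" using \<delta> by (simp add: algebra_simps)

      then have "int k \<le> \<lfloor>(1 + \<delta>) * real k\<rfloor>" by (simp add: le_floor_iff)
      then show ?thesis using fl0 by (simp add: j0_def)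
    qed
    have g_le: "w j * g j k \<le> 2 * (if j0 \<le> j then w j else 0) + 2 * e k * w j" for j
      using w[of j] e[of k] low_iff[of j] by (auto simp: g_def)
    have "(\<Sum>j\<in>{k..N}. w j * g j k) \<le> (\<Sum>j\<in>{k..N}. 2 * (if j0 \<le> j then w j else 0) + 2 * e k * w j)"
      by (intro sum_mono g_le)
    also have "\<dots> = 2 * (\<Sum>j\<in>{k..N}. if j0 \<le> j then w j else 0) + 2 * e k * (\<Sum>j\<in>{k..N}. w j)"
      by (simp add: sum.distrib sum_distrib_left)
    also have "(\<Sum>j\<in>{k..N}. w j) = b k" using k by (intro telesc) auto
    also have "(\<Sum>j\<in>{k..N}. if j0 \<le> j then w j else 0) \<le> C * \<beta> k"
    proof -
      have "(\<Sum>j\<in>{k..N}. if j0 \<le> j then w j else 0) = (\<Sum>j\<in>{j0..N}. w j)"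
      proof -
        have "{k..N} \<inter> {j. j0 \<le> j} = {j0..N}" using kj0 by auto
        then show ?thesis by (simp add: sum.If_cases)
      qed
      also have "\<dots> \<le> C * \<beta> k"
      proof (cases "j0 \<le> N")
        case True
        then have "(\<Sum>j\<in>{j0..N}. w j) = b j0" by (intro telesc) auto
        moreover obtain m where m: "m \<in> {j0..N}" "b j0 = \<beta> m" using b_in[OF True] by auto
        moreover have "(1 + \<delta>) * real k < real m" using low_iff[of m] m by auto
        ultimately show ?thesis using C by auto
      next
        case False
        then have "{j0..N} = {}" by auto
        moreover have "0 \<le> C * \<beta> k"
        proof -
          have "(1 + \<delta>) * real k < real (j0)" using low_iff by simp
          then have "\<beta> j0 \<le> C * \<beta> k" by (rule C)
          then show ?thesis using pos[of j0] by linarith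
        qed
        ultimately show ?thesis by simp
      qed
      finally show ?thesis .
    qed
    finally have "(\<Sum>j\<in>{k..N}. w j * g j k) \<le> 2 * (C * \<beta> k) + 2 * e k * b k"
      by simp
    also have "2 * e k * b k \<le> 2 * (D * \<beta> k) * M"
    proof -
      have "0 \<le> D * \<beta> k" using D[of k] e[of k] by linarith
      then show ?thesis by (intro mult_mono b_le_M) (use D e b_nonneg in \<open>auto\<close>)
    qed

    finally show "(\<Sum>j\<in>{k..N}. w j * g j k) \<le> (2 * C + 2 * M * D) * \<beta> k"
      by (simp add: algebra_simps)
  qed
  also have "\<dots> = (2 * C + 2 * M * D) * (\<Sum>k\<le>N. \<beta> k * A k)"
    unfolding sum_distrib_left by (rule sum.cong) (auto simp: mult_ac)

  finally show ?thesis .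
qed

lemma sq_add_le: "(cmod (x + y))\<^sup>2 \<le> 2 * (cmod x)\<^sup>2 + 2 * (cmod y)\<^sup>2"
proof -
  have "cmod (x + y) \<le> cmod x + cmod y" by (rule norm_triangle_ineq)
  then have "(cmod (x + y))\<^sup>2 \<le> (cmod x + cmod y)\<^sup>2" by (intro power_mono) auto
  also have "\<dots> \<le> 2 * (cmod x)\<^sup>2 + 2 * (cmod y)\<^sup>2"
    using sum_squares_bound[of "cmod x" "cmod y"] by (simp add: power2_eq_square algebra_simps)
  finally show ?thesis .
qed

lemma block_bound:
  fixes f \<phi> :: "complex \<Rightarrow> complex" and \<delta> \<theta> :: real
  assumes holf: "f holomorphic_on ball 0 1" and holp: "\<phi> holomorphic_on ball 0 1"
    and pball: "\<phi> ` ball 0 1 \<subseteq> ball 0 1" and p0: "\<phi> 0 = 0"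
    and \<delta>: "\<delta> > 0" and \<theta>: "\<theta> \<ge> 0"
    and tb: "\<And>n k. real n \<le> (1 + \<delta>) * real k \<Longrightarrow> cmod (taylor_coeff (\<lambda>z. \<phi> z ^ k) n) \<le> \<theta> ^ k"
  shows "(\<Sum>n\<le>j. (cmod (taylor_coeff (f \<circ> \<phi>) n))\<^sup>2) \<le>
    (\<Sum>k\<le>j. (cmod (taylor_coeff f k))\<^sup>2 *
       (if (1 + \<delta>) * real k < real j then 2 else 2 * (((1 + \<delta>) * real k + 1)\<^sup>2 * \<theta> ^ (2 * k))))"
proof -
  define a where "a k = taylor_coeff f k" for k
  define t where "t n k = taylor_coeff (\<lambda>z. \<phi> z ^ k) n" for n k
  define low where "low k \<longleftrightarrow> (1 + \<delta>) * real k < real j" for k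
  define e where "e k = ((1 + \<delta>) * real k + 1)\<^sup>2 * \<theta> ^ (2 * k)" for k
  define p where "p k = (if low k then a k else 0)" for k
  define q where "q k = (if low k then 0 else a k)" for k
  define cL where "cL n = (\<Sum>k\<le>j. p k * t n k)" for n
  define cH where "cH n = (\<Sum>k\<le>j. q k * t n k)" for n
  have split: "taylor_coeff (f \<circ> \<phi>) n = cL n + cH n" if "n \<le> j" for n
  proof -
    have "taylor_coeff (f \<circ> \<phi>) n = (\<Sum>k\<le>j. a k * t n k)"
      unfolding a_def t_def by (rule taylor_coeff_comp_trunc[OF holf holp pball p0 that])
    also have "\<dots> = (\<Sum>k\<le>j. p k * t n k + q k * t n k)"
      by (rule sum.cong[OF refl]) (simp add: p_def q_def)
    finally show ?thesis by (simp add: cL_def cH_def sum.distrib)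
  qed
  have cL_eq: "cL n = taylor_coeff (\<lambda>z. \<Sum>k\<le>j. p k * \<phi> z ^ k) n" for n
  proof -
    have "taylor_coeff (\<lambda>z. \<Sum>k\<le>j. p k * \<phi> z ^ k) n = (\<Sum>k\<le>j. taylor_coeff (\<lambda>z. p k * \<phi> z ^ k) n)"
      by (rule taylor_coeff_sum) (auto intro!: holomorphic_intros holp)
    also have "\<dots> = (\<Sum>k\<le>j. p k * t n k)"
      unfolding t_def by (rule sum.cong[OF refl], rule taylor_coeff_cmult) (auto intro!: holomorphic_intros holp)
    finally show ?thesis by (simp add: cL_def)
  qed
  have LW: "(\<Sum>n\<le>j. (cmod (cL n))\<^sup>2) \<le> (\<Sum>k\<le>j. (cmod (p k))\<^sup>2)"
    unfolding cL_eq by (rule littlewood_coeff[OF holp pball p0])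
  define v where "v k = cmod (q k) * \<theta> ^ k" for k
  have cH_le: "cmod (cH n) \<le> (\<Sum>k\<le>j. v k)" if "n \<le> j" for n
  proof -
    have "cmod (cH n) \<le> (\<Sum>k\<le>j. cmod (q k * t n k))" unfolding cH_def by (rule norm_sum)
    also have "\<dots> \<le> (\<Sum>k\<le>j. v k)"
    proof (rule sum_mono)
      fix k assume k: "k \<in> {..j}"
      show "cmod (q k * t n k) \<le> v k"
      proof (cases "low k")
        case True then show ?thesis by (simp add: q_def v_def)
      next
        case False
        then have "real n \<le> (1 + \<delta>) * real k" using that by (simp add: low_def)
        then have "cmod (t n k) \<le> \<theta> ^ k" unfolding t_def by (rule tb)
        then show ?thesis unfolding v_def norm_mult by (intro mult_left_mono) auto
      qed
    qed
    finally show ?thesis .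
  qed
  have cH_sq: "(cmod (cH n))\<^sup>2 \<le> (\<Sum>k\<le>j. (v k)\<^sup>2) * (real j + 1)" if "n \<le> j" for n
  proof -
    have "(cmod (cH n))\<^sup>2 \<le> (\<Sum>k\<le>j. v k)\<^sup>2" using cH_le[OF that] by (intro power_mono) auto
    also have "\<dots> \<le> (\<Sum>k\<le>j. (v k)\<^sup>2) * real (card {..j})" by (rule sum_squared_le_sum_of_squares)
    finally show ?thesis by (simp add: add.commute)
  qed
  have H:
 "(\<Sum>n\<le>j. (cmod (cH n))\<^sup>2) \<le> (\<Sum>k\<le>j. (cmod (q k))\<^sup>2 * e k)"
  proof -
    have "(\<Sum>n\<le>j. (cmod (cH n))\<^sup>2) \<le> (\<Sum>n\<le>j. (\<Sum>k\<le>j. (v k)\<^sup>2) * (real j + 1))"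
      by (rule sum_mono) (use cH_sq in auto)
    also have "\<dots> = (\<Sum>k\<le>j. (v k)\<^sup>2 * (real j + 1)\<^sup>2)"
      by (simp add: sum_distrib_right sum_distrib_left power2_eq_square mult_ac add.commute)

    also have "\<dots> \<le> (\<Sum>k\<le>j. (cmod (q k))\<^sup>2 * e k)"
    proof (rule sum_mono)
      fix k assume "k \<in> {..j}"
      show "(v k)\<^sup>2 * (real j + 1)\<^sup>2 \<le> (cmod (q k))\<^sup>2 * e k"
      proof (cases "low k")
        case True then show ?thesis by (simp add: q_def v_def)
      next
        case False
        then have "real j + 1 \<le> (1 + \<delta>) * real k + 1" by (simp add: low_def)
        then have "(real j + 1)\<^sup>2 \<le> ((1 + \<delta>) * real k + 1)\<^sup>2" by (intro power_mono) auto
        then have "(cmod (q k))\<^sup>2 * \<theta> ^ (2 * k) * (real j + 1)\<^sup>2 \<le> (cmod (q k))\<^sup>2 * \<theta> ^ (2 * k) * ((1 + \<delta>) * real k + 1)\<^sup>2"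
          by (rule mult_left_mono) (use \<theta> in auto)
        moreover have "(v k)\<^sup>2 = (cmod (q k))\<^sup>2 * \<theta> ^ (2 * k)"
          unfolding v_def by (simp add: power_mult_distrib power_mult[symmetric] mult.commute)
        ultimately show ?thesis by (simp add: e_def mult_ac)

      qed
    qed
    finally show ?thesis .
  qed
  have "(\<Sum>n\<le>j. (cmod (taylor_coeff (f \<circ> \<phi>) n))\<^sup>2) \<le> (\<Sum>n\<le>j. 2 * (cmod (cL n))\<^sup>2 + 2 * (cmod (cH n))\<^sup>2)"
    by (rule sum_mono) (simp add: split sq_add_le)
  also have "\<dots> = 2 * (\<Sum>n\<le>j. (cmod (cL n))\<^sup>2) + 2 * (\<Sum>n\<le>j. (cmod (cH n))\<^sup>2)"
    by (simp add: sum.distrib sum_distrib_left)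
  also have "\<dots> \<le> 2 * (\<Sum>k\<le>j. (cmod (p k))\<^sup>2) + 2 * (\<Sum>k\<le>j. (cmod (q k))\<^sup>2 * e k)"
    using LW H by linarith
  also have "\<dots> = (\<Sum>k\<le>j. (cmod (a k))\<^sup>2 * (if low k then 2 else 2 * e k))"
    unfolding sum_distrib_left sum.distrib[symmetric] by (rule sum.cong[OF refl]) (simp add: p_def q_def)

  finally show ?thesis unfolding a_def low_def e_def .

qed

lemma decay:
  fixes \<theta> \<delta> \<alpha> :: real
  assumes "0 < \<theta>" "\<theta> < 1" "0 < \<delta>"
  shows "(\<lambda>k. ((1 + \<delta>) * real k + 1)\<^sup>2 * \<theta> ^ (2 * k) * real k powr \<alpha>) \<longlonglongrightarrow> 0"
proof -
  have "(\<lambda>k. ((1 + \<delta>) * real k + 1)\<^sup>2 * (\<theta>\<^sup>2) ^ k * real k powr \<alpha>) \<longlonglongrightarrow> 0"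
  proof -
    have "0 < \<theta>\<^sup>2" "\<theta>\<^sup>2 < 1" using assms by (auto simp: power_less_one_iff)
    then show ?thesis using assms(3) by real_asymp
  qed
  then show ?thesis by (simp add: power_mult)
qed

lemma rotation_case:
  fixes \<beta> :: "nat \<Rightarrow> real" and \<phi> :: "complex \<Rightarrow> complex"
  assumes rot: "\<And>z. norm z < 1 \<Longrightarrow> \<phi> z = \<alpha> * z" and na: "norm \<alpha> = 1"
  shows "comp_op_bounded \<beta> \<phi>"
proof -
  have key: "f \<circ> \<phi> \<in> H2 \<beta> \<and> H2_norm \<beta> (f \<circ> \<phi>) = H2_norm \<beta> f" if f: "f \<in> H2 \<beta>" for f
  proof -
    have holf: "f holomorphic_on ball 0 1" using f by (simp add: H2_def)
    have img: "\<alpha> * w \<in> ball 0 1" if "w \<in> ball 0 1" for w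
      using that na by (simp add: norm_mult)
    have hol2: "(\<lambda>w. f (\<alpha> * w)) holomorphic_on ball 0 1"
    proof -
      have "(\<lambda>w. \<alpha> * w) ` ball 0 1 \<subseteq> ball 0 1" using img by blast
      moreover have "(\<lambda>w. \<alpha> * w) holomorphic_on ball 0 1" by (intro holomorphic_intros)
      ultimately show ?thesis
        using holomorphic_on_compose_gen[of "\<lambda>w. \<alpha> * w" "ball 0 1" f "ball 0 1"] holf
        by (simp add: o_def)
    qed

    have holc: "(f \<circ> \<phi>) holomorphic_on ball 0 1"
    proof -
      have "(f \<circ> \<phi>) holomorphic_on ball 0 1 \<longleftrightarrow> (\<lambda>w. f (\<alpha> * w)) holomorphic_on ball 0 1"
        by (rule holomorphic_cong) (auto simp: rot)
      then show ?thesis using hol2 by simp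
    qed
    have tc: "taylor_coeff (f \<circ> \<phi>) n = \<alpha> ^ n * taylor_coeff f n" for n
    proof -
      have "taylor_coeff (f \<circ> \<phi>) n = taylor_coeff (\<lambda>w. f (\<alpha> * w)) n"
        by (rule taylor_coeff_cong[OF holc hol2]) (simp add: rot)
      also have "\<dots> = \<alpha> ^ n * taylor_coeff f n"
      proof -
        have "(deriv ^^ n) (\<lambda>w. f (\<alpha> * w)) 0 = \<alpha> ^ n * (deriv ^^ n) f (\<alpha> * 0)"
          by (rule higher_deriv_compose_linear[OF holf, where S="ball 0 1"]) (use img in auto)
        then show ?thesis unfolding taylor_coeff_def by simp
      qed

      finally show ?thesis .
    qed
    have eqt: "(cmod (taylor_coeff (f \<circ> \<phi>) n))\<^sup>2 * \<beta> n = (cmod (taylor_coeff f n))\<^sup>2 * \<beta> n" for n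
      by (simp add: tc norm_mult norm_power na)
    show ?thesis using f holc by (simp add: H2_def H2_norm_def eqt)
  qed
  show ?thesis unfolding comp_op_bounded_def
    by (rule conjI, use key in blast, rule exI[of _ 1], use key in simp)
qed

lemma nonrot:
  fixes \<beta> :: "nat \<Rightarrow> real" and \<phi> :: "complex \<Rightarrow> complex" and M m :: real
  assumes pos: "\<And>n. \<beta> n > 0" and bdd: "\<And>n. \<beta> n \<le> M" and minor: "polynomial_minoration \<beta>"
    and growth: "\<forall>\<delta>>0. \<exists>C>0. \<forall>m n. real m > (1 + \<delta>) * real n \<longrightarrow> \<beta> m \<le> C * \<beta> n"
    and holp: "\<phi> holomorphic_on ball 0 1" and pball: "\<phi> ` ball 0 1 \<subseteq> ball 0 1" and p0: "\<phi> 0 = 0"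
    and m: "0 < m" "m < 1/2" and mb: "\<And>z. norm z = 1/2 \<Longrightarrow> norm (\<phi> z) \<le> m"
  shows "comp_op_bounded \<beta> \<phi>"
proof -
  define q where "q = 2 * m"
  have q: "0 < q" "q < 1" using m by (auto simp: q_def)
  define \<delta> where "\<delta> = log 2 (2 / (1 + q))"
  define \<theta> where "\<theta> = 2 * q / (1 + q)"
  have \<delta>: "\<delta> > 0" using q unfolding \<delta>_def by (subst zero_less_log_cancel_iff) auto
  have pw: "2 powr \<delta> = 2 / (1 + q)" unfolding \<delta>_def using q by simp
  have \<theta>: "0 < \<theta>" "\<theta> < 1" using q by (auto simp: \<theta>_def field_simps)
  have m\<theta>: "m * 2 powr (1 + \<delta>) = \<theta>"
    using q by (simp add: powr_add pw \<theta>_def q_def field_simps)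
  have tb: "cmod (taylor_coeff (\<lambda>z. \<phi> z ^ k) n) \<le> \<theta> ^ k" if nk: "real n \<le> (1 + \<delta>) * real k" for n k
  proof -
    have hk: "(\<lambda>z. \<phi> z ^ k) holomorphic_on ball 0 1" by (intro holomorphic_intros holp)
    have "cmod (taylor_coeff (\<lambda>z. \<phi> z ^ k) n) \<le> m ^ k / (1/2) ^ n"
      by (rule taylor_coeff_bound[OF hk]) (auto simp: norm_power intro!: power_mono mb)
    also have "m ^ k / (1/2) ^ n = m ^ k * 2 powr (real n)"
      by (simp add: powr_realpow power_one_over)
    also have "\<dots> \<le> m ^ k * 2 powr ((1 + \<delta>) * real k)"
      by (intro mult_left_mono powr_mono nk) (use m in auto)
    also have "2 powr ((1 + \<delta>) * real k) = (2 powr (1 + \<delta>)) ^ k"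
      by (simp add: powr_realpow[symmetric] powr_powr)
    also have "m ^ k * (2 powr (1 + \<delta>)) ^ k = \<theta> ^ k"
      by (simp add: m\<theta>[symmetric] power_mult_distrib)
    finally show ?thesis .
  qed
  obtain C where C: "C > 0" "\<And>m n. real m > (1 + \<delta>) * real n \<Longrightarrow> \<beta> m \<le> C * \<beta> n"
    using growth \<delta> by blast
  define e where "e k = ((1 + \<delta>) * real k + 1)\<^sup>2 * \<theta> ^ (2 * k)" for k
  have e0: "e k \<ge> 0" for k using \<theta> by (simp add: e_def)
  obtain D where D: "\<And>k. e k \<le> D * \<beta> k"
  proof -
    obtain \<delta>0 \<alpha> where \<delta>0: "\<delta>0 > 0" "\<alpha> > 0" and mn: "\<And>n. n \<ge> 1 \<Longrightarrow> \<beta> n \<ge> \<delta>0 * real n powr (-\<alpha>)"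
      using minor unfolding polynomial_minoration_def by blast
    have "(\<lambda>k. e k * real k powr \<alpha>) \<longlonglongrightarrow> 0" unfolding e_def by (rule decay[OF \<theta> \<delta>])
    then have "Bseq (\<lambda>k. e k * real k powr \<alpha>)" by (intro convergent_imp_Bseq convergentI)
    then obtain K where K: "K > 0" "\<And>k. norm (e k * real k powr \<alpha>) \<le> K" by (auto elim!: BseqE)
    define D where "D = K / \<delta>0 + e 0 / \<beta> 0"
    have "e k \<le> D * \<beta> k" for k
    proof (cases "k = 0")
      case True
      have "0 \<le> K / \<delta>0 * \<beta> 0" using K \<delta>0 pos[of 0] by simp
      then show ?thesis using True pos[of 0] by (simp add: D_def distrib_right)
    next
      case False
      then have k1: "k \<ge> 1" by simp
      have kp: "real k powr \<alpha> > 0" using False by simp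
      have "e k * real k powr \<alpha> \<le> K" using K(2)[of k] e0[of k] kp by simp
      then have "e k \<le> K / real k powr \<alpha>" using kp by (simp add: field_simps)
      also have "K / real k powr \<alpha> = K * real k powr (-\<alpha>)" by (simp add: powr_minus_divide)
      also have "\<dots> \<le> K * (\<beta> k / \<delta>0)"
        using mn[OF k1] \<delta>0 K by (intro mult_left_mono) (auto simp: field_simps)
      also have "\<dots> \<le> D * \<beta> k"
      proof -
        have "0 \<le> e 0 / \<beta> 0 * \<beta> k" using e0[of 0] pos[of 0] pos[of k] by simp
        then show ?thesis by (simp add: D_def distrib_right)
      qed
      finally show ?thesis .
    qed
    then show ?thesis by (rule that)
  qed
  have D0: "D \<ge> 0"
  proof -
    have "0 \<le> D * \<beta> 0" using D[of 0] e0[of 0] by linarith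
    then show ?thesis using pos[of 0] by (simp add: zero_le_mult_iff)
  qed
  have M0: "M \<ge> 0" using bdd[of 0] pos[of 0] by linarith
  define K' where "K' = 2 * C + 2 * M * D"
  have K'0: "K' \<ge> 0" using C D0 M0 by (simp add: K'_def)
  have key: "(f \<circ> \<phi>) \<in> H2 \<beta> \<and> H2_norm \<beta> (f \<circ> \<phi>) \<le> sqrt K' * H2_norm \<beta> f" if f: "f \<in> H2 \<beta>" for f
  proof -
    have holf: "f holomorphic_on ball 0 1" and sf: "summable (\<lambda>n. (cmod (taylor_coeff f n))\<^sup>2 * \<beta> n)"
      using f by (auto simp: H2_def)
    define S where "S = (\<Sum>n. (cmod (taylor_coeff f n))\<^sup>2 * \<beta> n)"
    have S0: "S \<ge> 0" unfolding S_def by (rule suminf_nonneg[OF sf]) (use pos in \<open>simp add: less_imp_le\<close>)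
    have blk: "(\<Sum>n\<le>j. (cmod (taylor_coeff (f \<circ> \<phi>) n))\<^sup>2) \<le>
       (\<Sum>k\<le>j. (cmod (taylor_coeff f k))\<^sup>2 * (if (1 + \<delta>) * real k < real j then 2 else 2 * e k))" for j
      unfolding e_def by (rule block_bound[OF holf holp pball p0 \<delta> _ tb]) (use \<theta> in simp)
    have part: "(\<Sum>n\<le>N. \<beta> n * (cmod (taylor_coeff (f \<circ> \<phi>) n))\<^sup>2) \<le> K' * (\<Sum>k\<le>N. \<beta> k * (cmod (taylor_coeff f k))\<^sup>2)" for N
      unfolding K'_def by (rule abstract_bound[where e=e, OF pos bdd _ _ e0 \<delta> C(2) D blk]) auto
    have part2: "(\<Sum>n<N. (cmod (taylor_coeff (f \<circ> \<phi>) n))\<^sup>2 * \<beta> n) \<le> K' * S" for N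
    proof (cases N)
      case 0 then show ?thesis using K'0 S0 by simp
    next
      case (Suc N')
      have "(\<Sum>k\<le>N'. \<beta> k * (cmod (taylor_coeff f k))\<^sup>2) \<le> S"
        unfolding S_def using sum_le_suminf[OF sf, of "{..N'}"] pos by (simp add: mult.commute less_imp_le)
      then have "K' * (\<Sum>k\<le>N'. \<beta> k * (cmod (taylor_coeff f k))\<^sup>2) \<le> K' * S"
        by (rule mult_left_mono[OF _ K'0])
      with part[of N'] have "(\<Sum>n\<le>N'. \<beta> n * (cmod (taylor_coeff (f \<circ> \<phi>) n))\<^sup>2) \<le> K' * S" by linarith
      then show ?thesis using Suc by (simp add: lessThan_Suc_atMost mult.commute)
    qed
    have sc: "summable (\<lambda>n. (cmod (taylor_coeff (f \<circ> \<phi>) n))\<^sup>2 * \<beta> n)"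
      by (rule summableI_nonneg_bounded[where x="K' * S", OF _ part2]) (use pos in \<open>simp add: less_imp_le\<close>)
    have holc: "(f \<circ> \<phi>) holomorphic_on ball 0 1"
      using holomorphic_on_compose_gen[OF holp holf pball] .
    have mem: "f \<circ> \<phi> \<in> H2 \<beta>" using holc sc by (simp add: H2_def)
    have "(\<Sum>n. (cmod (taylor_coeff (f \<circ> \<phi>) n))\<^sup>2 * \<beta> n) \<le> K' * S"
      by (rule suminf_le_const[OF sc part2])
    then have "H2_norm \<beta> (f \<circ> \<phi>) \<le> sqrt (K' * S)" unfolding H2_norm_def by (rule real_sqrt_le_mono)
    also have "sqrt (K' * S) = sqrt K' * H2_norm \<beta> f" by (simp add: H2_norm_def S_def real_sqrt_mult)
    finally show ?thesis using mem by simp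
  qed
  show ?thesis unfolding comp_op_bounded_def
  proof (intro conjI)
    show "\<forall>f\<in>H2 \<beta>. f \<circ> \<phi> \<in> H2 \<beta>" using key by blast
    show "\<exists>C. \<forall>f\<in>H2 \<beta>. H2_norm \<beta> (f \<circ> \<phi>) \<le> C * H2_norm \<beta> f"
      using key by blast
  qed
qed

theorem mainTheorem9:
  fixes \<beta> :: "nat \<Rightarrow> real" and \<phi> :: "complex \<Rightarrow> complex"
  assumes pos: "\<forall>n. \<beta> n > 0"
    and bdd: "\<exists>M. \<forall>n. \<beta> n \<le> M"
    and minor: "polynomial_minoration \<beta>"
    and growth: "\<forall>\<delta>>0. \<exists>C>0. \<forall>m n. real m > (1 + \<delta>) * real n \<longrightarrow> \<beta> m \<le> C * \<beta> n"
    and sym: "symbol \<phi>"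
    and fix0: "\<phi> 0 = 0"
  shows "comp_op_bounded \<beta> \<phi>"
proof -
  obtain M where M: "\<forall>n. \<beta> n \<le> M" using bdd by blast
  have holp: "\<phi> holomorphic_on ball 0 1" and pball: "\<phi> ` ball 0 1 \<subseteq> ball 0 1"
    using sym by (auto simp: symbol_def)
  show ?thesis
  proof (cases "\<exists>\<alpha>. (\<forall>z. norm z < 1 \<longrightarrow> \<phi> z = \<alpha> * z) \<and> norm \<alpha> = 1")
    case True
    then obtain \<alpha> where "\<forall>z. norm z < 1 \<longrightarrow> \<phi> z = \<alpha> * z" "norm \<alpha> = 1" by blast
    then show ?thesis by (intro rotation_case[of \<phi> \<alpha>]) auto
  next
    case False
    have no: "norm (\<phi> z) < 1" if "norm z < 1" for z
    proof -
      have "z \<in> ball 0 1" using that by simp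
      then have "\<phi> z \<in> ball 0 1" using pball by blast
      then show ?thesis by simp
    qed
    have sub: "sphere (0::complex) (1/2) \<subseteq> ball 0 1" by auto
    have cont: "continuous_on (sphere 0 (1/2)) (\<lambda>z. norm (\<phi> z))"
      by (intro continuous_intros continuous_on_subset[OF holomorphic_on_imp_continuous_on[OF holp] sub])
    have ne: "sphere (0::complex) (1/2) \<noteq> {}" by simp
    obtain z0 where z0: "z0 \<in> sphere 0 (1/2)" and z0max: "\<And>y. y \<in> sphere 0 (1/2) \<Longrightarrow> norm (\<phi> y) \<le> norm (\<phi> z0)"
      using continuous_attains_sup[OF compact_sphere ne cont] by blast

    have nz0: "norm z0 = 1/2" using z0 by simp
    have lt: "norm (\<phi> z0) < 1/2"
    proof -
      have nz1: "norm z0 < 1" using nz0 by simp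
      have le: "norm (\<phi> z0) \<le> norm z0" by (rule Schwarz_Lemma(1)[OF holp fix0 no nz1])

      have "norm (\<phi> z0) \<noteq> norm z0"
      proof
        assume eq: "norm (\<phi> z0) = norm z0"
        have "\<exists>\<alpha>. (\<forall>z. norm z < 1 \<longrightarrow> \<phi> z = \<alpha> * z) \<and> norm \<alpha> = 1"
        proof (rule Schwarz_Lemma(3)[OF holp fix0 no nz1])
          have "z0 \<noteq> 0" using nz0 by auto
          then show "(\<exists>z. norm z < 1 \<and> z \<noteq> 0 \<and> norm (\<phi> z) = norm z) \<or> norm (deriv \<phi> 0) = 1"
            using eq nz1 by blast
        qed


        with False show False by blast
      qed
      with le nz0 show ?thesis by simp
    qed
    define m where "m = max (norm (\<phi> z0)) (1/4)"
    have m: "0 < m" "m < 1/2" using lt by (auto simp: m_def)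
    have mb: "norm (\<phi> z) \<le> m" if "norm z = 1/2" for z
      using z0max[of z] that by (simp add: m_def)
    show ?thesis by (rule nonrot[OF _ _ minor growth holp pball fix0 m mb]) (use pos M in auto)
  qed
qed

end
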